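(* Let $q$ be odd, $q\not\equiv0\pmod 3$. Then the point $\mathbf P(1,0,1,0)$ is a $1_\Gamma$-point if $q\equiv-1\pmod3$ and a $3_\Gamma$-point if $q\equiv1\pmod3$.
   Context: In $\mathrm{PG}(3,q)$ with points $\mathbf P(x_0,x_1,x_2,x_3)$, the twisted cubic is $\mathcal C=\{\mathbf P(t^3,t^2,t,1):t\in\mathbb F_q\}\cup\{\mathbf P(1,0,0,0)\}$. Its osculating planes ($\Gamma$-planes) are $x_0-3tx_1+3t^2x_2-t^3x_3=0$ for $t\in\mathbb F_q$ and $x_3=0$. A $\mu_\Gamma$-point ($\mu\in\{1,3\}$) is a point off $\mathcal C$ lying in exactly $\mu$ distinct $\Gamma$-planes. *)

theory Defs
  imports Main
begin

type_synonym 'a vec4 = "'a \<times> 'a \<times> 'a \<times> 'a"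

definition scale4 :: "'a::field \<Rightarrow> 'a vec4 \<Rightarrow> 'a vec4" where
  "scale4 c v = (case v of (x0,x1,x2,x3) \<Rightarrow> (c*x0, c*x1, c*x2, c*x3))"

definition dot4 :: "'a::field vec4 \<Rightarrow> 'a vec4 \<Rightarrow> 'a" where
  "dot4 a v = (case a of (a0,a1,a2,a3) \<Rightarrow> case v of (x0,x1,x2,x3) \<Rightarrow>
      a0*x0 + a1*x1 + a2*x2 + a3*x3)"

definition pg_point :: "'a::field vec4 \<Rightarrow> 'a vec4 set" where
  "pg_point v = {w. \<exists>c. c \<noteq> 0 \<and> w = scale4 c v}"

definition PG3_points :: "'a::field vec4 set set" where
  "PG3_points = {pg_point v | v. v \<noteq> (0,0,0,0)}"

definition plane_of :: "'a::field vec4 \<Rightarrow> 'a vec4 set set" where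
  "plane_of a = {pg_point v | v. v \<noteq> (0,0,0,0) \<and> dot4 a v = 0}"

definition twisted_cubic :: "'a::field vec4 set set" where
  "twisted_cubic = {pg_point (t^3, t^2, t, 1) | t. True} \<union> {pg_point (1,0,0,0)}"

text \<open>Osculating planes: x0 - 3t x1 + 3t^2 x2 - t^3 x3 = 0 and x3 = 0.\<close>
definition Gamma_planes :: "'a::field vec4 set set set" where
  "Gamma_planes = {plane_of (1, -3*t, 3*t^2, -(t^3)) | t. True} \<union> {plane_of (0,0,0,1)}"

definition mu_Gamma_point :: "nat \<Rightarrow> 'a::field vec4 set \<Rightarrow> bool" where
  "mu_Gamma_point mu P \<longleftrightarrow> P \<in> PG3_points \<and> P \<notin> twisted_cubic \<and>
     card {\<pi> \<in> Gamma_planes. P \<in> \<pi>} = mu"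

end

theory Submission imports Defs "HOL-Computational_Algebra.Polynomial" begin

lemma coset_dvd:
  fixes H :: "'a::{finite,ab_group_add} set"
  assumes "0 \<in> H" and cl: "\<And>x y. x \<in> H \<Longrightarrow> y \<in> H \<Longrightarrow> x - y \<in> H"
  shows "card H dvd card (UNIV::'a set)"
proof -
  define C where "C = (\<lambda>x. (+) x ` H) ` UNIV"
  have zz: "z \<in> (+) z ` H" for z using assms(1) by (metis add_0_right image_eqI)
  have U: "\<Union>C = UNIV" unfolding C_def using zz by blast
  have cd: "\<forall>c\<in>C. card c = card H" unfolding C_def
    by (auto intro!: card_image inj_onI)
  have dj: "\<forall>c1\<in>C. \<forall>c2\<in>C. c1 \<noteq> c2 \<longrightarrow> c1 \<inter> c2 = {}"
  proof (intro ballI impI)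
    fix c1 c2 assume c: "c1 \<in> C" "c2 \<in> C" "c1 \<noteq> c2"
    then obtain x y where xy: "c1 = (+) x ` H" "c2 = (+) y ` H" unfolding C_def by auto
    show "c1 \<inter> c2 = {}"
    proof (rule ccontr)
      assume "c1 \<inter> c2 \<noteq> {}"
      then obtain h1 h2 where h: "h1 \<in> H" "h2 \<in> H" "x + h1 = y + h2" using xy by auto
      have d: "h2 - h1 \<in> H" "h1 - h2 \<in> H" using cl[OF h(2) h(1)] cl[OF h(1) h(2)] by auto
      have "c1 \<subseteq> c2"
      proof
        fix z assume "z \<in> c1"
        then obtain h where "h \<in> H" "z = x + h" using xy by auto
        moreover have "x + h = y + (h - (h1 - h2))" using h(3) by (simp add: algebra_simps)
        moreover have "h - (h1 - h2) \<in> H" by (rule cl[OF `h \<in> H` d(2)])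
        ultimately show "z \<in> c2" using xy by auto
      qed
      moreover have "c2 \<subseteq> c1"
      proof
        fix z assume "z \<in> c2"
        then obtain h where "h \<in> H" "z = y + h" using xy by auto
        moreover have "y + h = x + (h - (h2 - h1))" using h(3) by (simp add: algebra_simps)
        moreover have "h - (h2 - h1) \<in> H" by (rule cl[OF `h \<in> H` d(1)])
        ultimately show "z \<in> c1" using xy by auto
      qed
      ultimately show False using c by auto
    qed
  qed
  have "card H * card C = card (\<Union>C)"
    by (rule card_partition) (use cd dj in auto)
  then have "card H * card C = card (UNIV::'a set)" using U by simp
  then show ?thesis by (metis dvd_triv_left)
qed

lemma char2:
  assumes "odd (card (UNIV::'a::{finite,field} set))"
  shows "(2::'a) \<noteq> 0"
proof
  assume h: "(2::'a) = 0"
  have "(1::'a) + 1 = 0" using h by (simp add: one_add_one)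
  then have m: "-(1::'a) = 1" by (metis add_eq_0_iff)
  have "card {0,1::'a} dvd card (UNIV::'a set)"
    by (rule coset_dvd) (auto simp: m)
  moreover have "card {0,1::'a} = 2" by simp
  ultimately have "(2::nat) dvd card (UNIV::'a set)" by simp
  then show False using assms by simp
qed

lemma char3:
  assumes "(card (UNIV::'a::{finite,field} set)) mod 3 \<noteq> 0"
  shows "(3::'a) \<noteq> 0"
proof
  assume h: "(3::'a) = 0"
  have e1: "(2::'a) = 3 - 1" by simp
  have m1: "-(1::'a) = 2" using h e1 by simp
  have m2: "-(2::'a) = 1" using m1 by (metis minus_minus)
  have t: "(2::'a) - 1 = 1" by simp
  have e2: "(1::'a) = 3 - 2" by simp
  have n2: "(2::'a) \<noteq> 0" using h e2 by (metis diff_zero zero_neq_one)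
  have n12: "(1::'a) \<noteq> 2" using t by (metis diff_self zero_neq_one)
  have "card {0,1,2::'a} dvd card (UNIV::'a set)"
    by (rule coset_dvd) (auto simp: m1 m2)
  moreover have "card {0,1,2::'a} = 3" using n2 n12 by auto
  ultimately show False using assms by auto
qed

lemma fermat:
  fixes x :: "'a::{finite,field}"
  assumes "x \<noteq> 0"
  shows "x ^ (card (UNIV::'a set) - 1) = 1"
proof -
  define U where "U = UNIV - {0::'a}"
  have cU: "card U = card (UNIV::'a set) - 1" unfolding U_def by (simp add: card_Diff_singleton)
  have b: "bij_betw ((*) x) U U" unfolding U_def using assms
    by (auto simp: bij_betw_def inj_on_def intro!: image_eqI[where x="y / x" for y])
  have "prod (\<lambda>y. x * y) U = prod id U"
    using prod.reindex_bij_betw[OF b, of id] by simp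
  moreover have "prod (\<lambda>y. x * y) U = x ^ card U * prod id U"
    by (simp add: prod.distrib)
  moreover have "prod id U \<noteq> 0" unfolding U_def by simp
  ultimately show ?thesis using cU by simp
qed


lemma omega_exists:
  assumes "(card (UNIV::'a::{finite,field} set)) mod 3 = 1"
  shows "\<exists>w::'a. w \<noteq> 1 \<and> w ^ 3 = 1"
proof (rule ccontr)
  assume no: "\<not> ?thesis"
  let ?q = "card (UNIV::'a set)"
  define m where "m = (?q - 1) div 3"
  have q2: "?q \<ge> 2"
  proof -
    have "{0,1::'a} \<subseteq> UNIV" by simp
    then have "card {0,1::'a} \<le> ?q" by (rule card_mono[OF finite_UNIV])
    then show ?thesis by simp
  qed
  have qm: "?q - 1 = 3 * m" unfolding m_def using assms q2 by presburger
  have m1: "m \<ge> 1" using qm q2 assms by presburger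
  define G :: "'a poly" where "G = (\<Sum>k<m. [:0,0,0,1:] ^ k)"
  have pG: "poly G a = (\<Sum>k<m. (a^3) ^ k)" for a
    unfolding G_def by (simp add: poly_sum poly_power power3_eq_cube mult.assoc)
  obtain m' where mm: "m = Suc m'" using m1 by (cases m) auto
  have "(\<Sum>k<m. ((0::'a)^3) ^ k) = 1" unfolding mm by (simp add: sum.lessThan_Suc_shift del: sum.lessThan_Suc)
  then have P0: "poly G 0 = 1" using pG[of 0] by simp
  have G0: "G \<noteq> 0"
  proof
    assume "G = 0" then show False using P0 by simp
  qed
  have dG: "degree G \<le> 3 * (m - 1)"
    unfolding G_def
  proof (rule degree_sum_le)
    fix k assume "k \<in> {..<m}"
    then have "k \<le> m - 1" by auto
    have "degree ([:0,0,0,1::'a:] ^ k) \<le> degree [:0,0,0,1::'a:] * k" by (rule degree_power_le)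
    also have "\<dots> = 3 * k" by simp
    also have "\<dots> \<le> 3 * (m - 1)" using `k \<le> m - 1` by simp
    finally show "degree ([:0,0,0,1::'a:] ^ k) \<le> 3 * (m - 1)" .
  qed auto
  have sub: "UNIV - {0} \<subseteq> {1::'a} \<union> {x. poly G x = 0}"
  proof
    fix a :: 'a assume a: "a \<in> UNIV - {0}"
    show "a \<in> {1} \<union> {x. poly G x = 0}"
    proof (cases "a = 1")
      case False
      then have a3: "a ^ 3 \<noteq> 1" using no by auto
      have "(a^3)^m = 1" using fermat[of a] a qm by (simp add: power_mult)
      then have "(1 - a^3) * (\<Sum>i<m. (a^3)^i) = 0" using one_diff_power_eq[of "a^3" m] by simp
      then have "poly G a = 0" using a3 pG by simp
      then show ?thesis by simp
    qed simp
  qed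
  have "?q - 1 \<le> card ({1::'a} \<union> {x. poly G x = 0})"
    using card_mono[OF _ sub] by (simp add: card_Diff_singleton)
  also have "\<dots> \<le> 1 + card {x. poly G x = 0}" using card_Un_le[of "{1::'a}"] by simp
  also have "\<dots> \<le> 1 + 3 * (m - 1)" using card_poly_roots_bound[OF G0] dG by simp
  finally show False using qm m1 by linarith
qed

lemma no_root:
  assumes "(card (UNIV::'a::{finite,field} set)) mod 3 = 2" "(2::'a) \<noteq> 0" "(3::'a) \<noteq> 0"
  shows "1 + 3 * t^2 \<noteq> (0::'a)"
proof
  assume h: "1 + 3 * t^2 = (0::'a)"
  let ?q = "card (UNIV::'a set)"
  define s where "s = 3 * t"
  have h': "3*t^2 = -1" using h by (simp add: eq_neg_iff_add_eq_0 add.commute)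
  have "s^2 = 3 * (3*t^2)" unfolding s_def by (simp add: power2_eq_square algebra_simps)
  then have s2: "s^2 = -3" using h' by simp
  define w where "w = (s - 1) / 2"
  have sw: "s = 2*w+1" using assms(2) by (simp add: w_def field_simps)
  have "4*(w^2+w+1) = s^2 + 3" unfolding sw by (simp add: power2_eq_square algebra_simps)
  then have "4*(w^2+w+1) = 0" using s2 by simp
  moreover have "(4::'a) \<noteq> 0" using assms(2) by (metis mult_2_right numeral_Bit0 mult_eq_0_iff)
  ultimately have wq: "w^2 + w + 1 = 0" by (metis mult_eq_0_iff)
  have w3: "w^3 = 1"
  proof -
    have "w^3 - 1 = (w - 1) * (w^2 + w + 1)" by (simp add: algebra_simps power2_eq_square power3_eq_cube)
    then show ?thesis using wq by simp
  qed
  have w1: "w \<noteq> 1" using wq assms(3) by auto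
  have "w \<noteq> 0" using w3 by auto
  then have "w ^ (?q - 1) = 1" by (rule fermat)
  moreover have "?q - 1 = 3 * ((?q - 1) div 3) + 1" using assms(1) by presburger
  ultimately have "(w^3)^((?q - 1) div 3) * w = 1" by (metis power_mult power_add power_one_right)
  then show False using w3 w1 by simp
qed


lemma scale4_1[simp]: "scale4 1 v = v"
  by (simp add: scale4_def split: prod.split)

lemma dot4_scale: "dot4 a (scale4 c v) = c * dot4 a v"
  by (simp add: scale4_def dot4_def algebra_simps split: prod.split)

lemma in_pg_point_self: "v \<in> pg_point v"
  unfolding pg_point_def by (rule CollectI, rule exI[of _ 1]) simp

lemma pg_point_eq:
  assumes "pg_point v = pg_point w" shows "\<exists>c. c \<noteq> 0 \<and> v = scale4 c w"
proof -
  have "v \<in> pg_point w" using assms in_pg_point_self[of v] by simp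
  then show ?thesis unfolding pg_point_def by simp
qed

lemma pt_in_plane:
  assumes "v \<noteq> (0,0,0,0)"
  shows "pg_point v \<in> plane_of a \<longleftrightarrow> dot4 a v = 0"
proof
  assume "pg_point v \<in> plane_of a"
  then obtain w where w: "pg_point v = pg_point w" "dot4 a w = 0" unfolding plane_of_def by blast
  obtain c where "v = scale4 c w" using pg_point_eq[OF w(1)] by blast
  then show "dot4 a v = 0" using w(2) by (simp add: dot4_scale)
next
  assume "dot4 a v = 0" then show "pg_point v \<in> plane_of a" using assms unfolding plane_of_def by blast
qed

theorem lemma5p1:
  fixes P :: "'a::{finite,field} vec4 set"
  assumes "odd (card (UNIV :: 'a set))" and "(card (UNIV :: 'a set)) mod 3 \<noteq> 0"
    and "P = pg_point (1,0,1,0)"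
  shows "((card (UNIV :: 'a set)) mod 3 = 2 \<longrightarrow> mu_Gamma_point 1 P) \<and>
         ((card (UNIV :: 'a set)) mod 3 = 1 \<longrightarrow> mu_Gamma_point 3 P)"
proof -
  have two: "(2::'a) \<noteq> 0" using char2 assms(1) by blast
  have three: "(3::'a) \<noteq> 0" using char3 assms(2) by blast
  define A :: "'a \<Rightarrow> 'a vec4" where "A t = (1, -3*t, 3*t^2, -(t^3))" for t
  define E :: "'a vec4" where "E = (0,0,0,1)"
  have PA: "P \<in> plane_of (A t) \<longleftrightarrow> 1 + 3*t^2 = 0" for t
    unfolding assms(3) A_def by (subst pt_in_plane) (auto simp: dot4_def)
  have PE: "P \<in> plane_of E"
    unfolding assms(3) E_def by (subst pt_in_plane) (auto simp: dot4_def)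
  have S: "{\<pi> \<in> Gamma_planes. P \<in> \<pi>} = insert (plane_of E) ((\<lambda>t. plane_of (A t)) ` {t. 1 + 3*t^2 = 0})"
    unfolding Gamma_planes_def A_def[symmetric] E_def[symmetric] using PA PE by auto
  have base: "P \<in> PG3_points \<and> P \<notin> twisted_cubic"
  proof
    have "(1::'a,0::'a,1::'a,0::'a) \<noteq> (0,0,0,0)" by simp
    then show "P \<in> PG3_points" unfolding PG3_points_def assms(3) by blast
    show "P \<notin> twisted_cubic"
    proof
      assume "P \<in> twisted_cubic"
      then consider t where "P = pg_point (t^3, t^2, t, 1)" | "P = pg_point (1,0,0,0)"
        unfolding twisted_cubic_def by auto
      then show False
      proof cases
        case 1 then show False using pg_point_eq[of "(1,0,1,0)" "(t^3,t^2,t,1)"] assms(3) by (auto simp: scale4_def)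
      next
        case 2 then show False using pg_point_eq[of "(1,0,1,0)" "(1,0,0,0)"] assms(3) by (auto simp: scale4_def)
      qed
    qed
  qed
  have EA: "plane_of E \<noteq> plane_of (A t)" for t
  proof
    assume h: "plane_of E = plane_of (A t)"
    have "pg_point (1,0,0,0) \<in> plane_of E" by (subst pt_in_plane) (auto simp: dot4_def E_def)
    moreover have "pg_point (1,0,0,0) \<notin> plane_of (A t)" by (subst pt_in_plane) (auto simp: dot4_def A_def)
    ultimately show False using h by simp
  qed
  have AA: "plane_of (A t) \<noteq> plane_of (A (-t))" if "t \<noteq> 0" for t
  proof
    assume h: "plane_of (A t) = plane_of (A (-t))"
    have "pg_point (t^3,t^2,t,1) \<in> plane_of (A t)"
      by (subst pt_in_plane) (auto simp: dot4_def A_def power2_eq_square power3_eq_cube algebra_simps)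
    moreover have "pg_point (t^3,t^2,t,1) \<notin> plane_of (A (-t))"
    proof (subst pt_in_plane)
      have "dot4 (A (-t)) (t^3,t^2,t,1) = 2*2*2*t^3"
        by (simp add: dot4_def A_def power2_eq_square power3_eq_cube algebra_simps)
      moreover have "(2::'a)*2*2*t^3 \<noteq> 0" using two that by (simp only: mult_eq_0_iff power_eq_0_iff) simp
      ultimately show "dot4 (A (-t)) (t^3,t^2,t,1) \<noteq> 0" by metis
    qed auto
    ultimately show False using h by simp
  qed
  show ?thesis
  proof (intro conjI impI)
    assume q: "card (UNIV :: 'a set) mod 3 = 2"
    have "{t. 1 + 3*t^2 = (0::'a)} = {}" using no_root[OF q two three] by auto
    then have "{\<pi> \<in> Gamma_planes. P \<in> \<pi>} = {plane_of E}" using S by simp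
    then show "mu_Gamma_point 1 P" using base unfolding mu_Gamma_point_def by simp
  next
    assume q: "card (UNIV :: 'a set) mod 3 = 1"
    obtain w :: 'a where w: "w \<noteq> 1" "w^3 = 1" using omega_exists[OF q] by blast
    have "(w - 1) * (w^2 + w + 1) = w^3 - 1" by (simp add: algebra_simps power2_eq_square power3_eq_cube)
    then have wq: "w^2 + w + 1 = 0" using w by simp
    define t where "t = (2*w+1)/3"
    have t3: "3*t = 2*w+1" using three by (simp add: t_def)
    have "3 * (1 + 3*t^2) = 3 + (3*t)^2" by (simp add: power2_eq_square algebra_simps)
    also have "\<dots> = 4*(w^2+w+1)" unfolding t3 by (simp add: power2_eq_square algebra_simps)
    finally have "3 * (1 + 3*t^2) = 4*(w^2+w+1)" .
    then have "3 * (1 + 3*t^2) = 0" using wq by simp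
    then have t0: "1 + 3*t^2 = 0" using three by (metis mult_eq_0_iff)
    have tnz: "t \<noteq> 0" using t0 by auto
    have sol: "{x. 1 + 3*x^2 = (0::'a)} = {t, -t}"
    proof (intro set_eqI iffI)
      fix x assume "x \<in> {x. 1 + 3*x^2 = (0::'a)}"
      then have "1 + 3*x^2 = 1 + 3*t^2" using t0 by simp
      then have "3*x^2 = 3*t^2" by (rule add_left_imp_eq)
      then have "x^2 = t^2" using three by simp
      then have "(x - t) * (x + t) = 0" by (simp add: algebra_simps power2_eq_square)
      then show "x \<in> {t, -t}" by (auto simp: eq_neg_iff_add_eq_0)
    qed (use t0 in auto)
    have "{\<pi> \<in> Gamma_planes. P \<in> \<pi>} = {plane_of E, plane_of (A t), plane_of (A (-t))}"
      using S sol by simp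
    moreover have "card {plane_of E, plane_of (A t), plane_of (A (-t))} = 3"
      using EA[of t] EA[of "-t"] AA[OF tnz] by simp
    ultimately show "mu_Gamma_point 3 P" using base unfolding mu_Gamma_point_def by simp
  qed
qed

end
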